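(* Let $p,d\in C^{2}([0,\infty),\mathbb{R})$, $b\in C^2([0,\infty),\mathbb{C})$, $c\in C^1([0,\infty),\mathbb{C})$, $q\in C([0,\infty),\mathbb{R})$ with $p>0$ on $[0,\infty)$, and assume: (B1) the (possibly improper) limit $d_\infty:=\lim_{t\to\infty}d(t)\in\mathbb{R}\cup\{\pm\infty\}$ exists; (B2) there are constants $\beta,\gamma>0$ with $|b(t)|\le\beta(|d(t)|+1)$ and $|c(t)|\le\gamma(|d(t)|+1)$ for all $t\ge0$; (B3a) for some $\lambda\in\mathbb{R}\setminus\{d_\infty\}$ there is $t_\lambda\ge0$ with $\lambda\notin d([t_\lambda,\infty))$ and $\pi(\cdot,\lambda)$ bounded on $[t_\lambda,\infty)$; (B3b) for every $\lambda\in\mathbb{R}\setminus(\overline{\Delta([0,\infty))}\cup\{d_\infty\})$ there is $t_\lambda\ge0$ with $\lambda\notin d([t_\lambda,\infty))$ and $\rho(\cdot,\lambda)$, $\kappa(\cdot,\lambda)$, $1/\pi(\cdot,\lambda)$ bounded on $[t_\lambda,\infty)$. Let $\delta_-:=\inf_{t\ge0}\Delta(t)$, $\delta_+:=\sup_{t\ge0}\Delta(t)$. (i) If $d_\infty\in\mathbb{R}$, then $\delta_+\in\mathbb{R}$, and $\overline{\Delta([0,\infty))}=[\delta_-,\delta_+]$ with $\delta_-\in\mathbb{R}$ if $\liminf_{t\to\infty}p(t)>0$, while $\overline{\Delta([0,\infty))}=(-\infty,\delta_+]$ if $\liminf_{t\to\infty}p(t)=0$. (ii) If $d_\infty=+\infty$,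 then $\overline{\Delta([0,\infty))}=[\delta_-,\delta_+]$ if $\liminf_{t\to\infty}\frac{p(t)}{d(t)}>0$; and, in the case $\Delta([0,\infty))\ne\mathbb{R}$, there is $s\in\mathbb{R}$ such that $\overline{\Delta([0,\infty))}=[s,+\infty)$ if $\liminf_{t\to\infty}\frac{p(t)}{d(t)}=0$ and $\liminf_{t\to\infty}\big(p-\frac{|b|^2}{d}\big)(t)>0$, while $\overline{\Delta([0,\infty))}=(-\infty,s]$ if $\liminf_{t\to\infty}\frac{p(t)}{d(t)}=0$ and $\limsup_{t\to\infty}\big(p-\frac{|b|^2}{d}\big)(t)<0$. (iii) If $d_\infty=-\infty$, then $\overline{\Delta([0,\infty))}=(-\infty,\delta_+]$.
   Context: Notation: $\Delta(t):=d(t)-|b(t)|^2/p(t)$. For $t$ with $d(t)\ne\lambda$: $\pi(t,\lambda):=p(t)-\frac{|b(t)|^2}{d(t)-\lambda}$, $\rho(t,\lambda):=-\frac{2\operatorname{Im}(b(t)\overline{c(t)})}{d(t)-\lambda}+i\frac{\partial}{\partial t}\pi(t,\lambda)$, $\kappa(t,\lambda):=q(t)-\lambda-\frac{|c(t)|^2}{d(t)-\lambda}+\frac{\partial}{\partial t}\Big(\frac{\overline{b(t)}c(t)}{d(t)-\lambda}\Big)$. The set $\overline{\Delta([0,\infty))}$ is the regular part of the essential spectrum of every closed symmetric extension of the associated operator matrix. *)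

theory Defs
  imports "HOL-Analysis.Analysis"
begin

definition C1_on :: "real set \<Rightarrow> (real \<Rightarrow> 'a::real_normed_vector) \<Rightarrow> bool" where
  "C1_on S f \<longleftrightarrow> (\<exists>f'. (\<forall>t\<in>S. (f has_vector_derivative f' t) (at t within S))
                        \<and> continuous_on S f')"

definition C2_on :: "real set \<Rightarrow> (real \<Rightarrow> 'a::real_normed_vector) \<Rightarrow> bool" where
  "C2_on S f \<longleftrightarrow> (\<exists>f' f''. (\<forall>t\<in>S. (f has_vector_derivative f' t) (at t within S)
                                 \<and> (f' has_vector_derivative f'' t) (at t within S))
                        \<and> continuous_on S f'')"

definition Delta :: "(real \<Rightarrow> real) \<Rightarrow> (real \<Rightarrow> real) \<Rightarrow> (real \<Rightarrow> complex) \<Rightarrow> real \<Rightarrow> real" where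
  "Delta p d b t = d t - (cmod (b t))\<^sup>2 / p t"

definition piF :: "(real \<Rightarrow> real) \<Rightarrow> (real \<Rightarrow> real) \<Rightarrow> (real \<Rightarrow> complex) \<Rightarrow> real \<Rightarrow> real \<Rightarrow> real" where
  "piF p d b t lam = p t - (cmod (b t))\<^sup>2 / (d t - lam)"

definition rhoF :: "(real \<Rightarrow> real) \<Rightarrow> (real \<Rightarrow> real) \<Rightarrow> (real \<Rightarrow> complex) \<Rightarrow> (real \<Rightarrow> complex)
                    \<Rightarrow> real \<Rightarrow> real \<Rightarrow> complex" where
  "rhoF p d b c t lam =
     complex_of_real (- 2 * Im (b t * cnj (c t)) / (d t - lam))
     + \<i> * complex_of_real (vector_derivative (\<lambda>s. piF p d b s lam) (at t within {0..}))"

definition kappaF :: "(real \<Rightarrow> real) \<Rightarrow> (real \<Rightarrow> real) \<Rightarrow> (real \<Rightarrow> complex) \<Rightarrow> (real \<Rightarrow> complex)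
                    \<Rightarrow> (real \<Rightarrow> real) \<Rightarrow> real \<Rightarrow> real \<Rightarrow> complex" where
  "kappaF p d b c q t lam =
     complex_of_real (q t - lam - (cmod (c t))\<^sup>2 / (d t - lam))
     + vector_derivative (\<lambda>s. cnj (b s) * c s / complex_of_real (d s - lam)) (at t within {0..})"

end

theory Submission imports Defs begin

lemma conn_closure_ereal:
  fixes S :: "real set"
  assumes conn: "connected S" and ne: "S \<noteq> {}"
  shows "closure S = {x. Inf (ereal ` S) \<le> ereal x \<and> ereal x \<le> Sup (ereal ` S)}"
proof (intro equalityI subsetI)
  fix x assume x: "x \<in> closure S"
  obtain s0 where s0: "s0 \<in> S" using ne by auto
  show "x \<in> {x. Inf (ereal ` S) \<le> ereal x \<and> ereal x \<le> Sup (ereal ` S)}"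
  proof (simp, intro conjI)
    show "Inf (ereal ` S) \<le> ereal x"
    proof (rule ccontr)
      assume "\<not> ?thesis"
      hence lt: "ereal x < Inf (ereal ` S)" by simp
      have le: "Inf (ereal ` S) \<le> ereal s0" using s0 by (simp add: INF_lower)
      then obtain r where r: "Inf (ereal ` S) = ereal r" using lt
        by (cases "Inf (ereal ` S)") auto
      have "x < r" using lt r by simp
      then obtain y where y: "y \<in> S" "dist y x < r - x"
        using x closure_approachable[of x S] by (metis diff_gt_0_iff_gt)
      have "ereal r \<le> ereal y" using r y(1) by (metis INF_lower)
      thus False using y(2) by (simp add: dist_real_def)
    qed
    show "ereal x \<le> Sup (ereal ` S)"
    proof (rule ccontr)
      assume "\<not> ?thesis"
      hence lt: "Sup (ereal ` S) < ereal x" by simp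
      have le: "ereal s0 \<le> Sup (ereal ` S)" using s0 by (simp add: SUP_upper)
      then obtain r where r: "Sup (ereal ` S) = ereal r" using lt
        by (cases "Sup (ereal ` S)") auto
      have "r < x" using lt r by simp
      then obtain y where y: "y \<in> S" "dist y x < x - r"
        using x closure_approachable[of x S] by (metis diff_gt_0_iff_gt)
      have "ereal y \<le> ereal r" using r y(1) by (metis SUP_upper)
      thus False using y(2) by (simp add: dist_real_def)
    qed
  qed
next
  fix x assume x: "x \<in> {x. Inf (ereal ` S) \<le> ereal x \<and> ereal x \<le> Sup (ereal ` S)}"
  show "x \<in> closure S"
    unfolding closure_approachable
  proof (intro allI impI)
    fix e :: real assume e: "e > 0"
    have x1: "Inf (ereal ` S) \<le> ereal x" "ereal x \<le> Sup (ereal ` S)" using x by auto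
    have "ereal x < ereal (x + e)" using e by simp
    hence "Inf (ereal ` S) < ereal (x + e)" using x1(1) by (rule order.strict_trans1[rotated])
    then obtain y1 where y1: "y1 \<in> S" "y1 < x + e"
      by (auto simp: Inf_less_iff)
    have "ereal (x - e) < ereal x" using e by simp
    hence "ereal (x - e) < Sup (ereal ` S)" using x1(2) by (rule order.strict_trans2)
    then obtain y2 where y2: "y2 \<in> S" "x - e < y2"
      by (auto simp: less_Sup_iff)
    show "\<exists>y\<in>S. dist y x < e"
    proof (cases "x - e < y1")
      case True thus ?thesis using y1 by (intro bexI[of _ y1]) (auto simp: dist_real_def)
    next
      case F1: False
      show ?thesis
      proof (cases "y2 < x + e")
        case True thus ?thesis using y2 by (intro bexI[of _ y2]) (auto simp: dist_real_def)
      next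
        case False
        have "x \<in> S" using connectedD_interval[OF conn y1(1) y2(1), of x] F1 False e by auto
        thus ?thesis using e by (intro bexI[of _ x]) auto
      qed
    qed
  qed
qed

lemma conn_UNIV_ereal:
  fixes S :: "real set"
  assumes conn: "connected S" and i: "Inf (ereal ` S) = -\<infinity>" and s: "Sup (ereal ` S) = \<infinity>"
  shows "S = UNIV"
proof (intro set_eqI iffI)
  fix x :: real
  have "Inf (ereal ` S) < ereal x" using i by simp
  then obtain y1 where y1: "y1 \<in> S" "y1 < x" by (auto simp: Inf_less_iff)
  have "ereal x < Sup (ereal ` S)" using s by simp
  then obtain y2 where y2: "y2 \<in> S" "x < y2" by (auto simp: less_Sup_iff)
  show "x \<in> S" using connectedD_interval[OF conn y1(1) y2(1), of x] y1 y2 by auto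
qed simp

lemma C2_cont: "C2_on S f \<Longrightarrow> continuous_on S f"
  unfolding C2_on_def continuous_on_eq_continuous_within
  using has_vector_derivative_continuous by blast


lemma INF_MInf:
  fixes f :: "real \<Rightarrow> real"
  assumes "\<And>B. \<exists>t\<in>A. f t < B"
  shows "(INF t\<in>A. ereal (f t)) = -\<infinity>"
proof -
  have "(INF t\<in>A. ereal (f t)) < ereal B" for B
    using assms[of B] by (auto simp: INF_less_iff)
  note * = this
  show ?thesis
  proof (cases "(INF t\<in>A. ereal (f t))")
    case (real r) with *[of r] show ?thesis by simp
  next
    case PInf with *[of 0] show ?thesis by simp
  qed simp
qed

lemma SUP_PInf:
  fixes f :: "real \<Rightarrow> real"
  assumes "\<And>B. \<exists>t\<in>A. f t > B"
  shows "(SUP t\<in>A. ereal (f t)) = \<infinity>"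
proof -
  have "(SUP t\<in>A. ereal (f t)) > ereal B" for B
    using assms[of B] by (auto simp: less_SUP_iff)
  note * = this
  show ?thesis
  proof (cases "(SUP t\<in>A. ereal (f t))")
    case (real r) with *[of r] show ?thesis by simp
  next
    case MInf with *[of 0] show ?thesis by simp
  qed simp
qed

lemma Delta_le_d:
  assumes "p t > 0" shows "Delta p d b t \<le> d t"
  using assms by (simp add: Delta_def)

lemma Delta_eq:
  assumes "p t > 0" "d t \<noteq> 0"
  shows "Delta p d b t = d t / p t * (p t - (cmod (b t))\<^sup>2 / d t)"
  using assms by (simp add: Delta_def field_simps)

theorem proposition5p1:
  fixes p d q :: "real \<Rightarrow> real" and b c :: "real \<Rightarrow> complex" and dinf :: ereal
  assumes p_C2: "C2_on {0..} p" and d_C2: "C2_on {0..} d"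
    and b_C2: "C2_on {0..} b" and c_C1: "C1_on {0..} c"
    and q_C0: "continuous_on {0..} q"
    and p_pos: "\<forall>t\<ge>0. p t > 0"
    and B1: "((\<lambda>t. ereal (d t)) \<longlongrightarrow> dinf) at_top"
    and B2: "\<exists>\<beta>>0. \<exists>\<gamma>>0. \<forall>t\<ge>0. cmod (b t) \<le> \<beta> * (\<bar>d t\<bar> + 1) \<and> cmod (c t) \<le> \<gamma> * (\<bar>d t\<bar> + 1)"
    and B3a: "\<exists>lam. ereal lam \<noteq> dinf \<and> (\<exists>tl\<ge>0. lam \<notin> d ` {tl..}
                 \<and> bounded ((\<lambda>t. piF p d b t lam) ` {tl..}))"
    and B3b: "\<forall>lam. lam \<notin> closure (Delta p d b ` {0..}) \<and> ereal lam \<noteq> dinf \<longrightarrow>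
                (\<exists>tl\<ge>0. lam \<notin> d ` {tl..}
                   \<and> bounded ((\<lambda>t. rhoF p d b c t lam) ` {tl..})
                   \<and> bounded ((\<lambda>t. kappaF p d b c q t lam) ` {tl..})
                   \<and> (\<forall>t\<ge>tl. piF p d b t lam \<noteq> 0)
                   \<and> bounded ((\<lambda>t. 1 / piF p d b t lam) ` {tl..}))"
  defines "\<delta>m \<equiv> (INF t\<in>{0..}. ereal (Delta p d b t))"
    and "\<delta>p \<equiv> (SUP t\<in>{0..}. ereal (Delta p d b t))"
  shows
    "(\<bar>dinf\<bar> \<noteq> \<infinity> \<longrightarrow>
        \<bar>\<delta>p\<bar> \<noteq> \<infinity>
      \<and> (Liminf at_top (\<lambda>t. ereal (p t)) > 0 \<longrightarrow>
           \<bar>\<delta>m\<bar> \<noteq> \<infinity> \<and> closure (Delta p d b ` {0..}) = {real_of_ereal \<delta>m .. real_of_ereal \<delta>p})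
      \<and> (Liminf at_top (\<lambda>t. ereal (p t)) = 0 \<longrightarrow>
           closure (Delta p d b ` {0..}) = {.. real_of_ereal \<delta>p}))
   \<and> (dinf = \<infinity> \<longrightarrow>
        (Liminf at_top (\<lambda>t. ereal (p t / d t)) > 0 \<longrightarrow>
           closure (Delta p d b ` {0..}) = {x. \<delta>m \<le> ereal x \<and> ereal x \<le> \<delta>p})
      \<and> (Delta p d b ` {0..} \<noteq> UNIV \<longrightarrow>
           (Liminf at_top (\<lambda>t. ereal (p t / d t)) = 0
              \<and> Liminf at_top (\<lambda>t. ereal (p t - (cmod (b t))\<^sup>2 / d t)) > 0 \<longrightarrow>
              (\<exists>s. closure (Delta p d b ` {0..}) = {s..}))
         \<and> (Liminf at_top (\<lambda>t. ereal (p t / d t)) = 0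
              \<and> Limsup at_top (\<lambda>t. ereal (p t - (cmod (b t))\<^sup>2 / d t)) < 0 \<longrightarrow>
              (\<exists>s. closure (Delta p d b ` {0..}) = {..s}))))
   \<and> (dinf = - \<infinity> \<longrightarrow>
        closure (Delta p d b ` {0..}) = {x. ereal x \<le> \<delta>p})" (is "?I \<and> ?II \<and> ?III")
proof -
  define S where "S = Delta p d b ` {0..}"
  have pne: "\<And>t. t \<ge> 0 \<Longrightarrow> p t \<noteq> 0" using p_pos by force
  have contp: "continuous_on {0..} p" using C2_cont[OF p_C2] .
  have contd: "continuous_on {0..} d" using C2_cont[OF d_C2] .
  have contb: "continuous_on {0..} b" using C2_cont[OF b_C2] .
  have contD: "continuous_on {0..} (Delta p d b)"
    unfolding Delta_def[abs_def]
    by (intro continuous_intros contd contb contp) (auto dest: pne)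
  have conn: "connected S" unfolding S_def
    by (rule connected_continuous_image[OF contD]) simp
  have ne: "S \<noteq> {}" unfolding S_def by auto
  have mdef: "\<delta>m = Inf (ereal ` S)" unfolding \<delta>m_def S_def by (simp add: image_comp)
  have pdef: "\<delta>p = Sup (ereal ` S)" unfolding \<delta>p_def S_def by (simp add: image_comp)
  have cl: "closure S = {x. \<delta>m \<le> ereal x \<and> ereal x \<le> \<delta>p}"
    unfolding mdef pdef by (rule conn_closure_ereal[OF conn ne])
  have cl': "closure (Delta p d b ` {0..}) = {x. \<delta>m \<le> ereal x \<and> ereal x \<le> \<delta>p}"
    using cl unfolding S_def .
  have m0: "\<delta>m \<le> ereal (Delta p d b 0)" unfolding \<delta>m_def by (rule INF_lower) simp
  have p0: "ereal (Delta p d b 0) \<le> \<delta>p" unfolding \<delta>p_def by (rule SUP_upper) simp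
  have mlow: "\<And>t. t \<ge> 0 \<Longrightarrow> \<delta>m \<le> ereal (Delta p d b t)" unfolding \<delta>m_def by (rule INF_lower) simp
  have pup: "\<And>t. t \<ge> 0 \<Longrightarrow> ereal (Delta p d b t) \<le> \<delta>p" unfolding \<delta>p_def by (rule SUP_upper) simp
  have partI: "?I"
  proof
    assume fin: "\<bar>dinf\<bar> \<noteq> \<infinity>"
    then obtain r where r: "dinf = ereal r" by (cases dinf) auto
    have dlim: "(d \<longlongrightarrow> r) at_top" using B1 r by simp
    have "eventually (\<lambda>t. dist (d t) r < 1) at_top" using tendstoD[OF dlim, of 1] by simp
    then obtain N0 where N0: "\<And>t. t \<ge> N0 \<Longrightarrow> dist (d t) r < 1" by (auto simp: eventually_at_top_linorder)
    define N where "N = max N0 0"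
    have "bounded (d ` {0..N})"
      by (intro compact_imp_bounded compact_continuous_image continuous_on_subset[OF contd]) auto
    then obtain K where K0: "\<forall>x\<in>d ` {0..N}. \<bar>x\<bar> \<le> K" unfolding bounded_real by blast
    have K: "\<bar>d t\<bar> \<le> K" if "t \<in> {0..N}" for t using K0 that by blast
    define D where "D = max K (\<bar>r\<bar> + 1)"
    have dbd: "\<bar>d t\<bar> \<le> D" if "t \<ge> 0" for t
    proof (cases "t \<le> N")
      case True thus ?thesis using K[of t] that by (auto simp: D_def)
    next
      case False
      hence "dist (d t) r < 1" using N0 by (auto simp: N_def)
      hence "\<bar>d t - r\<bar> < 1" by (simp add: dist_real_def)
      hence "\<bar>d t\<bar> \<le> \<bar>r\<bar> + 1" by linarith
      thus ?thesis by (simp add: D_def)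
    qed
    have pbd: "\<delta>p \<le> ereal D" unfolding \<delta>p_def
    proof (rule SUP_least)
      fix t :: real assume "t \<in> {0..}"
      hence "Delta p d b t \<le> d t" "\<bar>d t\<bar> \<le> D" using Delta_le_d[of p t d b] p_pos dbd by auto
      thus "ereal (Delta p d b t) \<le> ereal D" by simp
    qed
    obtain s where s: "\<delta>p = ereal s" using p0 pbd by (cases \<delta>p) auto
    show "\<bar>\<delta>p\<bar> \<noteq> \<infinity>
      \<and> (Liminf at_top (\<lambda>t. ereal (p t)) > 0 \<longrightarrow>
           \<bar>\<delta>m\<bar> \<noteq> \<infinity> \<and> closure (Delta p d b ` {0..}) = {real_of_ereal \<delta>m .. real_of_ereal \<delta>p})
      \<and> (Liminf at_top (\<lambda>t. ereal (p t)) = 0 \<longrightarrow>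
           closure (Delta p d b ` {0..}) = {.. real_of_ereal \<delta>p})"
    proof (intro conjI impI)
      show "\<bar>\<delta>p\<bar> \<noteq> \<infinity>" using s by simp
    next
      assume L: "Liminf at_top (\<lambda>t. ereal (p t)) > 0"
      obtain c where c: "0 < ereal c" "ereal c < Liminf at_top (\<lambda>t. ereal (p t))"
        using ereal_dense2 L by blast
      have "eventually (\<lambda>t. p t > c) at_top" using less_LiminfD[OF c(2)] by simp
      then obtain N2 where N2: "\<And>t. t \<ge> N2 \<Longrightarrow> p t > c" by (auto simp: eventually_at_top_linorder)
      define N' where "N' = max N2 0"
      have cN: "continuous_on {0..N'} p" by (rule continuous_on_subset[OF contp]) auto
      have neN: "{0..N'} \<noteq> {}" by (simp add: N'_def)
      obtain x0 where x0: "x0 \<in> {0..N'}" "\<And>y. y \<in> {0..N'} \<Longrightarrow> p x0 \<le> p y"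
        using continuous_attains_inf[OF compact_Icc neN cN] by blast
      define P0 where "P0 = min c (p x0)"
      have P0pos: "P0 > 0" using c x0 p_pos by (auto simp: P0_def)
      have plow: "P0 \<le> p t" if "t \<ge> 0" for t
      proof (cases "t \<le> N'")
        case True thus ?thesis using x0(2)[of t] that by (auto simp: P0_def)
      next
        case False
        hence "c < p t" using N2[of t] by (simp add: N'_def)
        thus ?thesis by (simp add: P0_def)
      qed
      obtain \<beta> where \<beta>: "\<beta> > 0" "\<And>t. t \<ge> 0 \<Longrightarrow> cmod (b t) \<le> \<beta> * (\<bar>d t\<bar> + 1)" using B2 by blast
      define Q where "Q = (\<beta> * (D + 1))\<^sup>2 / P0"
      have Dlow: "- D - Q \<le> Delta p d b t" if t: "t \<ge> 0" for t
      proof -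
        have "cmod (b t) \<le> \<beta> * (\<bar>d t\<bar> + 1)" using \<beta>(2)[OF t] .
        also have "\<dots> \<le> \<beta> * (D + 1)"
          using dbd[OF t] \<beta>(1) by (intro mult_left_mono) auto
        finally have "cmod (b t) \<le> \<beta> * (D + 1)" .
        hence b2: "(cmod (b t))\<^sup>2 \<le> (\<beta> * (D + 1))\<^sup>2" by (simp add: power_mono)
        have pt: "p t \<ge> P0" using plow[OF t] .
        have "(cmod (b t))\<^sup>2 / p t \<le> (\<beta> * (D + 1))\<^sup>2 / p t"
          using b2 p_pos t by (intro divide_right_mono) (auto intro: less_imp_le)
        also have "\<dots> \<le> (\<beta> * (D + 1))\<^sup>2 / P0"
          using pt P0pos by (intro divide_left_mono) auto
        finally have "(cmod (b t))\<^sup>2 / p t \<le> Q" by (simp add: Q_def)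
        thus ?thesis using dbd[OF t] by (simp add: Delta_def)
      qed
      have mbd: "ereal (- D - Q) \<le> \<delta>m" unfolding \<delta>m_def
        by (rule INF_greatest) (use Dlow in auto)
      obtain m where m: "\<delta>m = ereal m" using m0 mbd by (cases \<delta>m) auto
      show "\<bar>\<delta>m\<bar> \<noteq> \<infinity>" using m by simp
      show "closure (Delta p d b ` {0..}) = {real_of_ereal \<delta>m .. real_of_ereal \<delta>p}"
        unfolding cl' m s by auto
    next
      assume L: "Liminf at_top (\<lambda>t. ereal (p t)) = 0"
      have minf: "\<delta>m = -\<infinity>"
      proof (rule ccontr)
        assume "\<delta>m \<noteq> -\<infinity>"
        then obtain m where m: "\<delta>m = ereal m" using m0 by (cases \<delta>m) auto
        have mle: "m \<le> Delta p d b t" if "t \<ge> 0" for t using mlow[OF that] m by simp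
        define lam where "lam = min (m - 1) (r - 1)"
        have "lam \<notin> closure (Delta p d b ` {0..})" unfolding cl' m by (auto simp: lam_def)
        moreover have "lam < r" by (simp add: lam_def)
        hence "ereal lam \<noteq> dinf" using r by simp
        ultimately obtain tl where tl: "tl \<ge> 0" "bounded ((\<lambda>t. 1 / piF p d b t lam) ` {tl..})"
          using B3b by blast
        then obtain B where B: "B > 0" "\<And>t. t \<ge> tl \<Longrightarrow> \<bar>1 / piF p d b t lam\<bar> \<le> B"
          by (auto simp: bounded_pos)
        have "eventually (\<lambda>t. ereal (1 / B) \<le> ereal (p t)) at_top"
          using eventually_ge_at_top[of tl]
        proof eventually_elim
          case (elim t)
          have t0: "t \<ge> 0" using elim tl by simp
          have pt: "p t > 0" using p_pos t0 by simp
          have mD: "m \<le> d t - (cmod (b t))\<^sup>2 / p t" using mle[OF t0] by (simp add: Delta_def)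
          have dl: "d t - lam > d t - m" by (simp add: lam_def)
          have dm: "d t - m \<ge> 0" using mD pt by (smt (verit) divide_nonneg_pos zero_le_power2)
          have b2: "(cmod (b t))\<^sup>2 \<le> p t * (d t - m)"
            using mD pt by (simp add: field_simps)
          have "(cmod (b t))\<^sup>2 / (d t - lam) \<le> p t * (d t - m) / (d t - lam)"
            using b2 dl dm by (intro divide_right_mono) auto
          also have "\<dots> < p t"
            using dl dm pt by (simp add: field_simps)
          finally have pi0: "piF p d b t lam > 0" by (simp add: piF_def)
          have pile: "piF p d b t lam \<le> p t"
            using dl dm by (simp add: piF_def)
          have "1 / piF p d b t lam \<le> B" using B(2)[OF elim] pi0 by simp
          hence "1 / B \<le> piF p d b t lam" using pi0 B(1) by (simp add: field_simps)
          thus ?case using pile by simp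
        qed
        hence "ereal (1 / B) \<le> Liminf at_top (\<lambda>t. ereal (p t))" by (rule Liminf_bounded)
        thus False using L B(1) by simp
      qed
      show "closure (Delta p d b ` {0..}) = {.. real_of_ereal \<delta>p}"
        unfolding cl' minf s by auto
    qed
  qed
  have partII: "?II"
  proof
    assume dp: "dinf = \<infinity>"
    have ev_d: "eventually (\<lambda>t. d t > 0) at_top"
    proof -
      have "eventually (\<lambda>t. ereal 0 < ereal (d t)) at_top" using B1 dp tendsto_PInfty by metis
      thus ?thesis by simp
    qed
    have ev_0: "eventually (\<lambda>t. (t::real) \<ge> 0) at_top" by (rule eventually_ge_at_top)
    show "(Liminf at_top (\<lambda>t. ereal (p t / d t)) > 0 \<longrightarrow>
           closure (Delta p d b ` {0..}) = {x. \<delta>m \<le> ereal x \<and> ereal x \<le> \<delta>p})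
      \<and> (Delta p d b ` {0..} \<noteq> UNIV \<longrightarrow>
           (Liminf at_top (\<lambda>t. ereal (p t / d t)) = 0
              \<and> Liminf at_top (\<lambda>t. ereal (p t - (cmod (b t))\<^sup>2 / d t)) > 0 \<longrightarrow>
              (\<exists>s. closure (Delta p d b ` {0..}) = {s..}))
         \<and> (Liminf at_top (\<lambda>t. ereal (p t / d t)) = 0
              \<and> Limsup at_top (\<lambda>t. ereal (p t - (cmod (b t))\<^sup>2 / d t)) < 0 \<longrightarrow>
              (\<exists>s. closure (Delta p d b ` {0..}) = {..s})))"
    proof (intro conjI impI)
      show "closure (Delta p d b ` {0..}) = {x. \<delta>m \<le> ereal x \<and> ereal x \<le> \<delta>p}"
        using cl' by simp
    next
      assume nU: "Delta p d b ` {0..} \<noteq> UNIV"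
      assume H: "Liminf at_top (\<lambda>t. ereal (p t / d t)) = 0
              \<and> Liminf at_top (\<lambda>t. ereal (p t - (cmod (b t))\<^sup>2 / d t)) > 0"
      obtain c where c: "0 < ereal c" "ereal c < Liminf at_top (\<lambda>t. ereal (p t - (cmod (b t))\<^sup>2 / d t))"
        using ereal_dense2 H by blast
      have ev_q: "eventually (\<lambda>t. p t - (cmod (b t))\<^sup>2 / d t > c) at_top"
        using less_LiminfD[OF c(2)] by simp
      have c0: "c > 0" using c by simp
      have pinf: "\<delta>p = \<infinity>"
      proof (rule ccontr)
        assume "\<delta>p \<noteq> \<infinity>"
        then obtain M where M: "\<delta>p = ereal M" using p0 by (cases \<delta>p) auto
        define M' where "M' = max M 1"
        have M'pos: "M' > 0" unfolding M'_def by simp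
        have "eventually (\<lambda>t. ereal (c / M') \<le> ereal (p t / d t)) at_top"
          using ev_d ev_q ev_0
        proof eventually_elim
          case (elim t)
          define r where "r = d t / p t"
          have pt: "p t > 0" using p_pos elim by auto
          have r0: "r > 0" using elim pt by (simp add: r_def)
          have "Delta p d b t \<le> M" using pup[of t] elim M by simp
          hence "r * (p t - (cmod (b t))\<^sup>2 / d t) \<le> M'"
            using Delta_eq[of p t d b] pt elim by (simp add: r_def M'_def)
          moreover have "r * c < r * (p t - (cmod (b t))\<^sup>2 / d t)" using r0 elim by simp
          ultimately have "r * c < M'" by simp
          hence "c / M' < 1 / r" using r0 M'pos by (simp add: field_simps)
          also have "1 / r = p t / d t" by (simp add: r_def)
          finally show ?case by simp
        qed
        hence "ereal (c / M') \<le> Liminf at_top (\<lambda>t. ereal (p t / d t))" by (rule Liminf_bounded)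
        hence "c / M' \<le> 0" using H by simp
        thus False using c0 M'pos by (simp add: divide_le_0_iff)
      qed
      have "\<delta>m \<noteq> -\<infinity>"
      proof
        assume a: "\<delta>m = -\<infinity>"
        have i: "Inf (ereal ` S) = -\<infinity>" using a mdef by simp
        have j: "Sup (ereal ` S) = \<infinity>" using pinf pdef by simp
        have "S = UNIV" by (rule conn_UNIV_ereal[OF conn i j])
        thus False using nU unfolding S_def by simp
      qed
      then obtain s where s: "\<delta>m = ereal s" using m0 by (cases \<delta>m) auto
      show "\<exists>s. closure (Delta p d b ` {0..}) = {s..}"
        unfolding cl' s pinf by (intro exI[of _ s]) auto
    next
      assume nU: "Delta p d b ` {0..} \<noteq> UNIV"
      assume H: "Liminf at_top (\<lambda>t. ereal (p t / d t)) = 0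
              \<and> Limsup at_top (\<lambda>t. ereal (p t - (cmod (b t))\<^sup>2 / d t)) < 0"
      obtain c where c: "ereal c < 0" "Limsup at_top (\<lambda>t. ereal (p t - (cmod (b t))\<^sup>2 / d t)) < ereal c"
        using ereal_dense2 H by blast
      have ev_q: "eventually (\<lambda>t. p t - (cmod (b t))\<^sup>2 / d t < c) at_top"
        using Limsup_lessD[OF c(2)] by simp
      have c0: "c < 0" using c by simp
      have minf: "\<delta>m = -\<infinity>"
      proof (rule ccontr)
        assume "\<delta>m \<noteq> -\<infinity>"
        then obtain m where m: "\<delta>m = ereal m" using m0 by (cases \<delta>m) auto
        define M' where "M' = max (- m) 1"
        have M'pos: "M' > 0" unfolding M'_def by simp
        have "eventually (\<lambda>t. ereal ((- c) / M') \<le> ereal (p t / d t)) at_top"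
          using ev_d ev_q ev_0
        proof eventually_elim
          case (elim t)
          define r where "r = d t / p t"
          have pt: "p t > 0" using p_pos elim by auto
          have r0: "r > 0" using elim pt by (simp add: r_def)
          have "m \<le> Delta p d b t" using mlow[of t] elim m by simp
          hence "- M' \<le> r * (p t - (cmod (b t))\<^sup>2 / d t)"
            using Delta_eq[of p t d b] pt elim by (simp add: r_def M'_def)
          moreover have "r * (p t - (cmod (b t))\<^sup>2 / d t) < r * c" using r0 elim by simp
          ultimately have "r * (- c) < M'" by simp
          hence "(- c) / M' < 1 / r" using r0 M'pos by (simp add: field_simps)
          also have "1 / r = p t / d t" by (simp add: r_def)
          finally show ?case by simp
        qed
        hence "ereal ((- c) / M') \<le> Liminf at_top (\<lambda>t. ereal (p t / d t))" by (rule Liminf_bounded)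
        hence "(- c) / M' \<le> 0" using H by simp
        thus False using c0 M'pos by (simp add: divide_le_0_iff zero_le_divide_iff)
      qed
      have "\<delta>p \<noteq> \<infinity>"
      proof
        assume a: "\<delta>p = \<infinity>"
        have i: "Inf (ereal ` S) = -\<infinity>" using minf mdef by simp
        have j: "Sup (ereal ` S) = \<infinity>" using a pdef by simp
        have "S = UNIV" by (rule conn_UNIV_ereal[OF conn i j])
        thus False using nU unfolding S_def by simp
      qed
      then obtain s where s: "\<delta>p = ereal s" using p0 by (cases \<delta>p) auto
      show "\<exists>s. closure (Delta p d b ` {0..}) = {..s}"
        unfolding cl' s minf by (intro exI[of _ s]) auto
    qed
  qed
  have partIII: "?III"
  proof
    assume dm: "dinf = - \<infinity>"
    have "\<delta>m = -\<infinity>" unfolding \<delta>m_def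
    proof (rule INF_MInf)
      fix B
      have "eventually (\<lambda>t. ereal (d t) < ereal B) at_top" using B1 dm tendsto_MInfty by metis
      then obtain N where N: "\<And>t. t \<ge> N \<Longrightarrow> d t < B" by (auto simp: eventually_at_top_linorder)
      define t where "t = max 0 N"
      have "Delta p d b t < B" using N[of t] Delta_le_d[of p t d b] p_pos by (simp add: t_def)
      thus "\<exists>t\<in>{0..}. Delta p d b t < B" by (intro bexI[of _ t]) (auto simp: t_def)
    qed
    thus "closure (Delta p d b ` {0..}) = {x. ereal x \<le> \<delta>p}" using cl unfolding S_def by simp
  qed
  show ?thesis using partI partII partIII by blast
qed

end
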